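(* Let $g:\mathbb{R}^n\to\mathbb{R}\cup\{+\infty\}$ be a proper closed convex function and let $f=f_1-f_2$, where $f_1,f_2:\mathbb{R}^n\to\mathbb{R}$ are convex differentiable functions such that $\nabla f_1$ is Lipschitz continuous with modulus $L>0$, $\nabla f_2$ is Lipschitz continuous with modulus $l\ge 0$, and $L\ge l$. Let $F=f+g$, and assume $\inf F>-\infty$ and that this infimum is attained. Let $\{x^k\}$ be generated by Algorithm 1 (described in the context) with $\bar\beta:=\sup_k\beta_k<\sqrt{L/(L+l)}$, and let $\Omega$ be the set of accumulation points of $\{x^k\}$. Then $\zeta:=\lim_{k\to\infty}F(x^k)$ exists and $F\equiv\zeta$ on $\Omega$.
   Context: For a proper closed convex $h$, $\mathrm{Prox}_h(v)=\arg\min_{x\in\mathbb{R}^n}\{h(x)+\tfrac12\|x-v\|^2\}$. Algorithm 1 (proximal gradient algorithm with extrapolation): choose $x^0\in\operatorname{dom} g$ and $\{\beta_k\}\subseteq[0,\sqrt{L/(L+l)}]$, set $x^{-1}=x^0$, and for $k=0,1,2,\dots$ set $y^k=x^k+\beta_k(x^k-x^{k-1})$ and $x^{k+1}=\mathrm{Prox}_{\frac1L g}\big(y^k-\tfrac1L\nabla f(y^k)\big)$. *)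

theory Defs
  imports "HOL-Analysis.Analysis"
begin

text \<open>Extended-real-valued functions g : R^n -> R \<union> {+inf} are modelled as maps into ereal
  that never take the value -inf.\<close>

definition proper_fun :: "('a \<Rightarrow> ereal) \<Rightarrow> bool" where
  "proper_fun g \<longleftrightarrow> (\<forall>x. g x \<noteq> -\<infinity>) \<and> (\<exists>x. g x \<noteq> \<infinity>)"

definition closed_fun :: "('a::topological_space \<Rightarrow> ereal) \<Rightarrow> bool" where
  "closed_fun g \<longleftrightarrow> closed {(x, r::real). g x \<le> ereal r}"

definition convex_fun :: "('a::real_vector \<Rightarrow> ereal) \<Rightarrow> bool" where
  "convex_fun g \<longleftrightarrow> (\<forall>x y t. 0 \<le> t \<and> t \<le> 1 \<longrightarrow>
      g ((1 - t) *\<^sub>R x + t *\<^sub>R y) \<le> ereal (1 - t) * g x + ereal t * g y)"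

definition is_prox :: "('a::real_normed_vector \<Rightarrow> ereal) \<Rightarrow> 'a \<Rightarrow> 'a \<Rightarrow> bool" where
  "is_prox h v z \<longleftrightarrow> (\<forall>w. h z + ereal ((norm (z - v))\<^sup>2 / 2) \<le> h w + ereal ((norm (w - v))\<^sup>2 / 2))"

definition accumulation_point :: "(nat \<Rightarrow> 'a::topological_space) \<Rightarrow> 'a \<Rightarrow> bool" where
  "accumulation_point x z \<longleftrightarrow> (\<exists>r. strict_mono r \<and> (x \<circ> r) \<longlonglongrightarrow> z)"

end

theory Submission imports Defs "HOL-Analysis.Analysis" begin

lemma norm_add_sq: "(norm (a + b))\<^sup>2 = (norm a)\<^sup>2 + 2 * (a \<bullet> b) + (norm (b::'a::real_inner))\<^sup>2"
  by (simp add: power2_norm_eq_inner inner_add inner_commute)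

lemma descent:
  fixes f :: "'a::euclidean_space \<Rightarrow> real"
  assumes der: "\<And>z. (f has_derivative (\<lambda>h. G z \<bullet> h)) (at z)"
    and lip: "C-lipschitz_on UNIV G"
  shows "f b \<le> f a + G a \<bullet> (b - a) + C / 2 * (norm (b - a))\<^sup>2"
proof -
  define \<phi> where "\<phi> t = f (a + t *\<^sub>R (b - a)) - t * (G a \<bullet> (b - a)) - C / 2 * t\<^sup>2 * (norm (b - a))\<^sup>2" for t
  have d: "(\<phi> has_derivative (\<lambda>h. h * (G (a + t *\<^sub>R (b - a)) \<bullet> (b - a) - G a \<bullet> (b - a) - C * t * (norm (b - a))\<^sup>2))) (at t within {0..1})" for t
  proof -
    have "((\<lambda>t. f (a + t *\<^sub>R (b - a))) has_derivative (\<lambda>h. G (a + t *\<^sub>R (b - a)) \<bullet> (h *\<^sub>R (b - a)))) (at t within {0..1})"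
      by (rule has_derivative_compose[where g = f, OF _ der]) (auto intro!: derivative_eq_intros)
    then show ?thesis unfolding \<phi>_def
      by (auto intro!: derivative_eq_intros simp: algebra_simps power2_eq_square)
  qed
  show ?thesis
  proof (cases "a = b")
    case True then show ?thesis by simp
  next
    case False
    obtain t where t: "t \<in> {0<..<1}" and eq: "\<phi> 1 - \<phi> 0 = (1 - 0) * (G (a + t *\<^sub>R (b - a)) \<bullet> (b - a) - G a \<bullet> (b - a) - C * t * (norm (b - a))\<^sup>2)"
      using mvt_simple[of 0 1 \<phi>, OF _ d] by auto
    have "G (a + t *\<^sub>R (b - a)) \<bullet> (b - a) - G a \<bullet> (b - a) = (G (a + t *\<^sub>R (b - a)) - G a) \<bullet> (b - a)"
      by (simp add: inner_diff_left)
    also have "\<dots> \<le> norm (G (a + t *\<^sub>R (b - a)) - G a) * norm (b - a)"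
      by (rule norm_cauchy_schwarz)
    also have "norm (G (a + t *\<^sub>R (b - a)) - G a) \<le> C * (t * norm (b - a))"
      using lipschitz_onD[OF lip, of "a + t *\<^sub>R (b - a)" a] t by (simp add: dist_norm)
    hence "norm (G (a + t *\<^sub>R (b - a)) - G a) * norm (b - a) \<le> C * (t * norm (b - a)) * norm (b - a)"
      by (simp add: mult_right_mono)
    finally have "\<phi> 1 - \<phi> 0 \<le> 0" using eq by (simp add: power2_eq_square algebra_simps)
    then show ?thesis unfolding \<phi>_def by simp
  qed
qed

lemma grad_convex:
  fixes f :: "'a::euclidean_space \<Rightarrow> real"
  assumes cv: "convex_on UNIV f" and der: "\<And>z. (f has_derivative (\<lambda>h. G z \<bullet> h)) (at z)"
  shows "f a + G a \<bullet> (b - a) \<le> f b"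
proof -
  define \<phi> where "\<phi> t = f (a + t *\<^sub>R (b - a))" for t
  have "convex_on UNIV \<phi>"
  proof (rule convex_onI)
    fix t x y :: real assume "t > 0" "t < 1"
    have "a + ((1 - t) * x + t * y) *\<^sub>R (b - a) = (1 - t) *\<^sub>R (a + x *\<^sub>R (b - a)) + t *\<^sub>R (a + y *\<^sub>R (b - a))"
      by (simp add: algebra_simps)
    then show "\<phi> ((1 - t) *\<^sub>R x + t *\<^sub>R y) \<le> (1 - t) * \<phi> x + t * \<phi> y"
      unfolding \<phi>_def using convex_onD[OF cv, of t] \<open>t>0\<close> \<open>t<1\<close> by simp
  qed auto
  moreover have "(\<phi> has_field_derivative (G a \<bullet> (b - a))) (at 0 within UNIV)"
  proof -
    have "(\<phi> has_derivative (\<lambda>h. G (a + 0 *\<^sub>R (b - a)) \<bullet> (h *\<^sub>R (b - a)))) (at 0)"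
      unfolding \<phi>_def
      by (rule has_derivative_compose[where g = f, OF _ der]) (auto intro!: derivative_eq_intros)
    moreover have "(\<lambda>h. h * (G a \<bullet> (b - a))) = (*) (G a \<bullet> (b - a))"
      by (rule ext) (simp add: mult.commute)
    ultimately show ?thesis unfolding has_field_derivative_def by simp
  qed
  ultimately have "\<phi> 1 - \<phi> 0 \<ge> (G a \<bullet> (b - a)) * (1 - 0)"
    by (intro convex_on_imp_above_tangent[where A = UNIV]) auto
  then show ?thesis unfolding \<phi>_def by simp
qed


lemma aux_False: "(d::real) = X + A/2 + E/2 - (Y + (A+2*Q+E)/2) \<Longrightarrow> d>0 \<Longrightarrow> t*E \<le> d/2 \<Longrightarrow> X + A/2 + (1-t)*E/2 \<le> Y + (A+2*Q+E)/2 \<Longrightarrow> False"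
  by (simp add: field_simps)

lemma prox_ineq:
  fixes g :: "'a::real_inner \<Rightarrow> ereal"
  assumes cv: "convex_fun g" and pr: "proper_fun g" and L: "L > 0"
    and P: "is_prox (\<lambda>z. ereal (1 / L) * g z) v z" and gw: "g w \<noteq> \<infinity>"
  shows "g z \<noteq> \<infinity> \<and> real_of_ereal (g z) / L + (norm (z - v))\<^sup>2 / 2 + (norm (w - z))\<^sup>2 / 2
           \<le> real_of_ereal (g w) / L + (norm (w - v))\<^sup>2 / 2"
proof -
  have ninf: "g q \<noteq> -\<infinity>" for q using pr by (simp add: proper_fun_def)
  obtain b where b: "g w = ereal b" using gw ninf[of w] by (cases "g w") auto
  have Pw: "ereal (1 / L) * g z + ereal ((norm (z - v))\<^sup>2 / 2) \<le> ereal (1 / L) * g w + ereal ((norm (w - v))\<^sup>2 / 2)"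
    using P by (simp add: is_prox_def)
  have gz: "g z \<noteq> \<infinity>"
  proof
    assume "g z = \<infinity>"
    then have "ereal (1 / L) * g z = \<infinity>" using L by simp
    then have X: "ereal (1 / L) * g z + ereal ((norm (z - v))\<^sup>2 / 2) = \<infinity>" by simp
    have "ereal (1 / L) * g w + ereal ((norm (w - v))\<^sup>2 / 2) = ereal (1 / L * b + (norm (w - v))\<^sup>2 / 2)"
      using b by simp
    then show False using Pw X by simp
  qed
  obtain a where a: "g z = ereal a" using gz ninf[of z] by (cases "g z") auto
  define A where "A = (norm (z - v))\<^sup>2"
  define E where "E = (norm (w - z))\<^sup>2"
  define Q where "Q = (z - v) \<bullet> (w - z)"
  have Bdef: "(norm (w - v))\<^sup>2 = A + 2 * Q + E"
    using norm_add_sq[of "z - v" "w - z"] unfolding A_def E_def Q_def by simp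
  have K: "a / L + A / 2 + (1 - t) * E / 2 \<le> b / L + (A + 2 * Q + E) / 2" if t: "0 < t" "t < 1" for t
  proof -
    define u where "u = (1 - t) *\<^sub>R z + t *\<^sub>R w"
    have gu: "g u \<le> ereal ((1 - t) * a + t * b)"
      using cv t unfolding convex_fun_def u_def
      by (metis a b less_eq_real_def times_ereal.simps(1) plus_ereal.simps(1))
    obtain c where c: "g u = ereal c" using gu ninf[of u] by (cases "g u") auto
    have cle: "c \<le> (1 - t) * a + t * b" using gu c by simp
    have Pu: "a / L + A / 2 \<le> c / L + (norm (u - v))\<^sup>2 / 2"
      using P a c unfolding is_prox_def A_def by (auto dest: spec[of _ u])
    have eq: "u - v = (z - v) + t *\<^sub>R (w - z)" unfolding u_def by (simp add: algebra_simps)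
    have uv: "(norm (u - v))\<^sup>2 = A + 2 * t * Q + t\<^sup>2 * E"
    proof -
      have "(norm (u - v))\<^sup>2 = (norm ((z - v) + t *\<^sub>R (w - z)))\<^sup>2" by (simp only: eq)
      also have "\<dots> = A + 2 * t * Q + t\<^sup>2 * E" unfolding norm_add_sq A_def E_def Q_def
        by (simp add: power_mult_distrib)
      finally show ?thesis .
    qed
    have "c / L \<le> ((1 - t) * a + t * b) / L" using cle L by (simp add: divide_right_mono)
    then have "a / L \<le> ((1 - t) * a + t * b) / L + t * Q + t\<^sup>2 * E / 2"
    proof -
      have "(A + 2 * t * Q + t\<^sup>2 * E) / 2 = A / 2 + t * Q + t\<^sup>2 * E / 2" by (simp add: field_simps)
      then show ?thesis using Pu uv \<open>c / L \<le> _\<close> by linarith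
    qed
    then have "t * (a / L) \<le> t * (b / L + Q + t * E / 2)"
      by (simp add: algebra_simps add_divide_distrib power2_eq_square diff_divide_distrib)
    then have "a / L \<le> b / L + Q + t * E / 2" by (rule mult_left_le_imp_le) (use t in simp)
    moreover have "(1 - t) * E / 2 = E / 2 - t * E / 2" by (simp add: field_simps)
    moreover have "(A + 2 * Q + E) / 2 = A / 2 + Q + E / 2" by (simp add: field_simps)
    ultimately show ?thesis by (smt (verit))
  qed
  have E0: "E \<ge> 0" unfolding E_def by simp
  have "a / L + A / 2 + E / 2 \<le> b / L + (A + 2 * Q + E) / 2"
  proof (rule ccontr)
    assume "\<not> ?thesis"
    then obtain d where dd: "d = a / L + A / 2 + E / 2 - (b / L + (A + 2 * Q + E) / 2)" and e: "d > 0" by auto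
    define t where "t = min (1/2) (d / (2 * (E + 1)))"
    have "d / (2 * (E + 1)) > 0" using e E0 by (intro divide_pos_pos) auto
    then have t0: "0 < t" "t < 1" unfolding t_def by auto
    have "t * E \<le> d / 2"
    proof -
      have "t \<le> d / (2 * (E + 1))" unfolding t_def by simp
      then have "t * (E + 1) \<le> d / 2"
        using E0 by (simp add: field_simps)
      moreover have "t * E \<le> t * (E + 1)" using t0 by simp
      ultimately show ?thesis by linarith
    qed
    moreover have "(1 - t) * E / 2 = E / 2 - t * E / 2" by (simp add: field_simps)
    ultimately show False using K[OF t0] dd e by (intro aux_False[of d "a / L" A E "b / L" Q t]) auto
  qed
  then show ?thesis using gz a b Bdef unfolding A_def E_def by simp
qed


lemma prox_grad:
  fixes g :: "'a::real_inner \<Rightarrow> ereal"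
  assumes cv: "convex_fun g" and pr: "proper_fun g" and L: "L > 0"
    and P: "is_prox (\<lambda>z. ereal (1 / L) * g z) (y - (1 / L) *\<^sub>R D) z" and gw: "g w \<noteq> \<infinity>"
  shows "g z \<noteq> \<infinity> \<and> real_of_ereal (g z) + D \<bullet> (z - y) + L / 2 * (norm (z - y))\<^sup>2 + L / 2 * (norm (w - z))\<^sup>2
           \<le> real_of_ereal (g w) + D \<bullet> (w - y) + L / 2 * (norm (w - y))\<^sup>2"
proof -
  note I = prox_ineq[OF cv pr L P gw]
  define gz where "gz = real_of_ereal (g z)"
  define gw' where "gw' = real_of_ereal (g w)"
  have ez: "(norm (z - (y - (1 / L) *\<^sub>R D)))\<^sup>2 = (norm (z - y))\<^sup>2 + 2 * ((1 / L) * (D \<bullet> (z - y))) + (1 / L)\<^sup>2 * (norm D)\<^sup>2" (is "_ = ?r")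
  proof -
    have "z - (y - (1 / L) *\<^sub>R D) = (z - y) + (1 / L) *\<^sub>R D" by (simp add: algebra_simps)
    then have "(norm (z - (y - (1 / L) *\<^sub>R D)))\<^sup>2 = (norm ((z - y) + (1 / L) *\<^sub>R D))\<^sup>2" by (simp only:)
    also have "\<dots> = ?r" unfolding norm_add_sq by (simp add: power_mult_distrib inner_commute power_divide)
    finally show ?thesis .
  qed
  have ew: "(norm (w - (y - (1 / L) *\<^sub>R D)))\<^sup>2 = (norm (w - y))\<^sup>2 + 2 * ((1 / L) * (D \<bullet> (w - y))) + (1 / L)\<^sup>2 * (norm D)\<^sup>2" (is "_ = ?r")
  proof -
    have "w - (y - (1 / L) *\<^sub>R D) = (w - y) + (1 / L) *\<^sub>R D" by (simp add: algebra_simps)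
    then have "(norm (w - (y - (1 / L) *\<^sub>R D)))\<^sup>2 = (norm ((w - y) + (1 / L) *\<^sub>R D))\<^sup>2" by (simp only:)
    also have "\<dots> = ?r" unfolding norm_add_sq by (simp add: power_mult_distrib inner_commute power_divide)
    finally show ?thesis .
  qed
  have J: "gz / L + ((norm (z - y))\<^sup>2 + 2 * ((1 / L) * (D \<bullet> (z - y))) + (1 / L)\<^sup>2 * (norm D)\<^sup>2) / 2 + (norm (w - z))\<^sup>2 / 2
     \<le> gw' / L + ((norm (w - y))\<^sup>2 + 2 * ((1 / L) * (D \<bullet> (w - y))) + (1 / L)\<^sup>2 * (norm D)\<^sup>2) / 2"
    using I ez ew unfolding gz_def gw'_def by simp
  have "L * (gz / L + ((norm (z - y))\<^sup>2 + 2 * ((1 / L) * (D \<bullet> (z - y))) + (1 / L)\<^sup>2 * (norm D)\<^sup>2) / 2 + (norm (w - z))\<^sup>2 / 2)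
     \<le> L * (gw' / L + ((norm (w - y))\<^sup>2 + 2 * ((1 / L) * (D \<bullet> (w - y))) + (1 / L)\<^sup>2 * (norm D)\<^sup>2) / 2)"
    using J L by (intro mult_left_mono) auto
  moreover have "L * (gz / L + ((norm (z - y))\<^sup>2 + 2 * ((1 / L) * (D \<bullet> (z - y))) + (1 / L)\<^sup>2 * (norm D)\<^sup>2) / 2 + (norm (w - z))\<^sup>2 / 2)
     = gz + D \<bullet> (z - y) + L / 2 * (norm (z - y))\<^sup>2 + L / 2 * (norm (w - z))\<^sup>2 + (norm D)\<^sup>2 / (2 * L)"
    using L by (simp add: field_simps power2_eq_square)
  moreover have "L * (gw' / L + ((norm (w - y))\<^sup>2 + 2 * ((1 / L) * (D \<bullet> (w - y))) + (1 / L)\<^sup>2 * (norm D)\<^sup>2) / 2)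
     = gw' + D \<bullet> (w - y) + L / 2 * (norm (w - y))\<^sup>2 + (norm D)\<^sup>2 / (2 * L)"
    using L by (simp add: field_simps power2_eq_square)
  ultimately have "gz + D \<bullet> (z - y) + L / 2 * (norm (z - y))\<^sup>2 + L / 2 * (norm (w - z))\<^sup>2
           \<le> gw' + D \<bullet> (w - y) + L / 2 * (norm (w - y))\<^sup>2"
    by linarith
  then show ?thesis using I unfolding gz_def gw'_def by simp
qed


theorem proposition3p5:
  fixes g :: "'a::euclidean_space \<Rightarrow> ereal"
    and f1 f2 :: "'a \<Rightarrow> real"
    and grad1 grad2 :: "'a \<Rightarrow> 'a"
    and L l :: real
    and x y :: "nat \<Rightarrow> 'a"
    and \<beta> :: "nat \<Rightarrow> real"
    and F :: "'a \<Rightarrow> ereal"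
  assumes g_proper: "proper_fun g" and g_closed: "closed_fun g" and g_convex: "convex_fun g"
    and f1_convex: "convex_on UNIV f1" and f2_convex: "convex_on UNIV f2"
    and f1_grad: "\<And>z. (f1 has_derivative (\<lambda>h. grad1 z \<bullet> h)) (at z)"
    and f2_grad: "\<And>z. (f2 has_derivative (\<lambda>h. grad2 z \<bullet> h)) (at z)"
    and L_pos: "L > 0" and l_nonneg: "l \<ge> 0" and L_ge: "L \<ge> l"
    and grad1_lip: "L-lipschitz_on UNIV grad1"
    and grad2_lip: "l-lipschitz_on UNIV grad2"
    and F_def: "\<And>z. F z = ereal (f1 z - f2 z) + g z"
    and inf_finite: "(INF z. F z) > -\<infinity>"
    and inf_attained: "\<exists>z. F z = (INF w. F w)"
    and x0_dom: "g (x 0) < \<infinity>"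
    and beta_range: "\<And>k. 0 \<le> \<beta> k \<and> \<beta> k \<le> sqrt (L / (L + l))"
    and beta_sup: "(SUP k. \<beta> k) < sqrt (L / (L + l))"
    and y_def: "\<And>k. y k = x k + \<beta> k *\<^sub>R (x k - x (k - 1))"
    and x_step: "\<And>k. is_prox (\<lambda>z. ereal (1 / L) * g z)
                          (y k - (1 / L) *\<^sub>R (grad1 (y k) - grad2 (y k))) (x (Suc k))"
  shows "\<exists>\<zeta>::real. (\<lambda>k. F (x k)) \<longlonglongrightarrow> ereal \<zeta> \<and> (\<forall>z. accumulation_point x z \<longrightarrow> F z = ereal \<zeta>)"
proof -
  have ninf: "g q \<noteq> -\<infinity>" for q using g_proper by (simp add: proper_fun_def)
  define D where "D k = grad1 (y k) - grad2 (y k)" for k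
  have PG: "g (x (Suc k)) \<noteq> \<infinity> \<and> real_of_ereal (g (x (Suc k))) + D k \<bullet> (x (Suc k) - y k) + L / 2 * (norm (x (Suc k) - y k))\<^sup>2 + L / 2 * (norm (w - x (Suc k)))\<^sup>2
           \<le> real_of_ereal (g w) + D k \<bullet> (w - y k) + L / 2 * (norm (w - y k))\<^sup>2" if "g w \<noteq> \<infinity>" for k w
    using prox_grad[OF g_convex g_proper L_pos x_step[of k, folded D_def] that] .
  have gfin: "g (x k) \<noteq> \<infinity>" for k
  proof (induction k)
    case 0 then show ?case using x0_dom by simp
  next
    case (Suc k) then show ?case using PG by blast
  qed
  define G where "G k = real_of_ereal (g (x k))" for k
  have gx: "g (x k) = ereal (G k)" for k
    using gfin[of k] ninf[of "x k"] unfolding G_def by (cases "g (x k)") auto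
  define Fr where "Fr k = f1 (x k) - f2 (x k) + G k" for k
  have Fx: "F (x k) = ereal (Fr k)" for k using F_def gx unfolding Fr_def by simp
  define d where "d k = norm (x k - x (k - 1))" for k
  have key: "Fr (Suc k) + L / 2 * (d (Suc k))\<^sup>2 \<le> Fr k + (L + l) / 2 * ((\<beta> k)\<^sup>2 * (d k)\<^sup>2)" for k
  proof -
    define z where "z = x (Suc k)"
    define w where "w = x k"
    define yk where "yk = y k"
    have P: "G (Suc k) + D k \<bullet> (z - yk) + L / 2 * (norm (z - yk))\<^sup>2 + L / 2 * (norm (w - z))\<^sup>2
           \<le> G k + D k \<bullet> (w - yk) + L / 2 * (norm (w - yk))\<^sup>2"
      using PG[OF gfin[of k], of k] unfolding G_def z_def w_def yk_def by simp
    have d1: "f1 z \<le> f1 yk + grad1 yk \<bullet> (z - yk) + L / 2 * (norm (z - yk))\<^sup>2"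
      by (rule descent[OF f1_grad grad1_lip])
    have d2: "f2 w \<le> f2 yk + grad2 yk \<bullet> (w - yk) + l / 2 * (norm (w - yk))\<^sup>2"
      by (rule descent[OF f2_grad grad2_lip])
    have c1: "f1 yk + grad1 yk \<bullet> (w - yk) \<le> f1 w"
      by (rule grad_convex[OF f1_convex f1_grad])
    have c2: "f2 yk + grad2 yk \<bullet> (z - yk) \<le> f2 z"
      by (rule grad_convex[OF f2_convex f2_grad])
    have Dz: "D k \<bullet> (z - yk) = grad1 yk \<bullet> (z - yk) - grad2 yk \<bullet> (z - yk)"
      unfolding D_def yk_def by (simp add: inner_diff_left)
    have Dw: "D k \<bullet> (w - yk) = grad1 yk \<bullet> (w - yk) - grad2 yk \<bullet> (w - yk)"
      unfolding D_def yk_def by (simp add: inner_diff_left)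
    have nwy: "(norm (w - yk))\<^sup>2 = (\<beta> k)\<^sup>2 * (d k)\<^sup>2"
    proof -
      have "w - yk = - (\<beta> k *\<^sub>R (x k - x (k - 1)))" unfolding w_def yk_def y_def by simp
      then have "norm (w - yk) = \<bar>\<beta> k\<bar> * d k" unfolding d_def by (simp only: norm_minus_cancel norm_scaleR)
      then show ?thesis by (simp add: power_mult_distrib)
    qed
    have nwz: "(norm (w - z))\<^sup>2 = (d (Suc k))\<^sup>2" unfolding d_def w_def z_def by (simp add: norm_minus_commute)
    have "Fr (Suc k) = f1 z - f2 z + G (Suc k)" unfolding Fr_def z_def ..
    moreover have "Fr k = f1 w - f2 w + G k" unfolding Fr_def w_def ..
    moreover have "(L + l) / 2 * ((\<beta> k)\<^sup>2 * (d k)\<^sup>2) = L / 2 * (norm (w - yk))\<^sup>2 + l / 2 * (norm (w - yk))\<^sup>2"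
      unfolding nwy by (simp add: field_simps)
    moreover have "L / 2 * (norm (w - z))\<^sup>2 = L / 2 * (d (Suc k))\<^sup>2" using nwz by simp
    ultimately show ?thesis using P d1 d2 c1 c2 Dz Dw by linarith
  qed

  define bb where "bb = (SUP k. \<beta> k)"
  have bdd: "bdd_above (range \<beta>)" using beta_range by (intro bdd_aboveI2[where M = "sqrt (L / (L + l))"]) auto
  have bk: "\<beta> k \<le> bb" for k unfolding bb_def by (rule cSUP_upper[OF _ bdd]) simp
  have b0: "0 \<le> \<beta> k" for k using beta_range by blast
  have bb0: "0 \<le> bb" using bk[of 0] b0[of 0] by linarith
  have Ll: "L + l > 0" using L_pos l_nonneg by linarith
  have "bb < sqrt (L / (L + l))" using beta_sup unfolding bb_def .
  then have "bb\<^sup>2 < (sqrt (L / (L + l)))\<^sup>2" using bb0 by (intro power_strict_mono) auto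
  then have "bb\<^sup>2 < L / (L + l)" using L_pos Ll by simp
  then have "(L + l) * bb\<^sup>2 < L" using Ll by (simp add: field_simps)
  define c where "c = (L - (L + l) * bb\<^sup>2) / 2"
  have c0: "c > 0" unfolding c_def using \<open>(L + l) * bb\<^sup>2 < L\<close> by simp
  define H where "H k = Fr k + L / 2 * (d k)\<^sup>2" for k
  have Hdec: "H (Suc k) + c * (d k)\<^sup>2 \<le> H k" for k
  proof -
    have "(\<beta> k)\<^sup>2 \<le> bb\<^sup>2" using bk[of k] b0[of k] by (intro power_mono) auto
    then have "(\<beta> k)\<^sup>2 * (d k)\<^sup>2 \<le> bb\<^sup>2 * (d k)\<^sup>2" by (intro mult_right_mono) auto
    then have "(L + l) / 2 * ((\<beta> k)\<^sup>2 * (d k)\<^sup>2) \<le> (L + l) / 2 * (bb\<^sup>2 * (d k)\<^sup>2)"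
      using Ll by (intro mult_left_mono) auto
    moreover have "(L + l) / 2 * (bb\<^sup>2 * (d k)\<^sup>2) = L / 2 * (d k)\<^sup>2 - c * (d k)\<^sup>2"
      unfolding c_def by (simp add: field_simps)
    ultimately show ?thesis using key[of k] unfolding H_def by linarith
  qed
  have "(INF z. F z) \<le> F (x 0)" by (rule INF_lower) simp
  then have "(INF z. F z) \<noteq> \<infinity>" using Fx[of 0] by auto
  then obtain m where m: "(INF z. F z) = ereal m" using inf_finite by (cases "INF z. F z") auto
  have Frm: "m \<le> Fr k" for k
  proof -
    have "(INF z. F z) \<le> F (x k)" by (rule INF_lower) simp
    then show ?thesis using m Fx[of k] by simp
  qed
  have Hm: "m \<le> H k" for k
  proof -
    have "0 \<le> L / 2 * (d k)\<^sup>2" using L_pos by simp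
    then show ?thesis using Frm[of k] unfolding H_def by linarith
  qed
  have "decseq H"
  proof (rule decseq_SucI)
    fix k show "H (Suc k) \<le> H k" using Hdec[of k] c0 by (smt (verit) zero_le_power2 mult_nonneg_nonneg)
  qed
  then obtain \<zeta> where Hlim: "H \<longlonglongrightarrow> \<zeta>" using Hm decseq_convergent by blast
  have "(\<lambda>k. H k - H (Suc k)) \<longlonglongrightarrow> \<zeta> - \<zeta>"
    by (intro tendsto_diff Hlim LIMSEQ_Suc)
  then have "(\<lambda>k. (H k - H (Suc k)) / c) \<longlonglongrightarrow> 0" by (auto intro: tendsto_divide_zero)
  note U = this
  have d2lim: "(\<lambda>k. (d k)\<^sup>2) \<longlonglongrightarrow> 0"
  proof (rule tendsto_sandwich[of "\<lambda>k. 0" "\<lambda>k. (d k)\<^sup>2" sequentially "\<lambda>k. (H k - H (Suc k)) / c" 0])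
    show "\<forall>\<^sub>F k in sequentially. 0 \<le> (d k)\<^sup>2" by simp
    show "\<forall>\<^sub>F k in sequentially. (d k)\<^sup>2 \<le> (H k - H (Suc k)) / c"
      using Hdec c0 by (auto simp: field_simps)
  qed (use U in simp_all)
  have dlim: "d \<longlonglongrightarrow> 0"
  proof -
    have "(\<lambda>k. sqrt ((d k)\<^sup>2)) \<longlonglongrightarrow> sqrt 0" by (intro tendsto_real_sqrt d2lim)
    moreover have "sqrt ((d k)\<^sup>2) = d k" for k unfolding d_def by simp
    ultimately show ?thesis by simp
  qed
  have Frlim: "Fr \<longlonglongrightarrow> \<zeta>"
  proof -
    have "(\<lambda>k. H k - L / 2 * (d k)\<^sup>2) \<longlonglongrightarrow> \<zeta> - L / 2 * 0"
      by (intro tendsto_intros Hlim d2lim)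
    moreover have "H k - L / 2 * (d k)\<^sup>2 = Fr k" for k unfolding H_def by simp
    ultimately show ?thesis by simp
  qed
  have Flim: "(\<lambda>k. F (x k)) \<longlonglongrightarrow> ereal \<zeta>" unfolding Fx using Frlim by simp
  show ?thesis
  proof (intro exI[of _ \<zeta>] conjI allI impI)
    show "(\<lambda>k. F (x k)) \<longlonglongrightarrow> ereal \<zeta>" by (rule Flim)
    fix z assume "accumulation_point x z"
    then obtain r where r: "strict_mono r" "(x \<circ> r) \<longlonglongrightarrow> z" unfolding accumulation_point_def by blast
    define s where "s j = Suc (r j)" for j
    have s: "strict_mono s" using r(1) unfolding s_def strict_mono_def by simp
    have xr: "(\<lambda>j. x (r j)) \<longlonglongrightarrow> z" using r(2) by (simp add: comp_def)
    have dr: "(\<lambda>j. d (r j)) \<longlonglongrightarrow> 0" using LIMSEQ_subseq_LIMSEQ[OF dlim r(1)] by (simp add: comp_def)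
    have ds: "(\<lambda>j. d (s j)) \<longlonglongrightarrow> 0" using LIMSEQ_subseq_LIMSEQ[OF dlim s] by (simp add: comp_def)
    have xs: "(\<lambda>j. x (s j)) \<longlonglongrightarrow> z"
    proof -
      have "(\<lambda>j. norm (x (s j) - x (r j))) \<longlonglongrightarrow> 0" using ds unfolding d_def s_def by simp
      then have "(\<lambda>j. x (s j) - x (r j)) \<longlonglongrightarrow> 0" by (simp only: tendsto_norm_zero_iff)
      then have "(\<lambda>j. x (r j) + (x (s j) - x (r j))) \<longlonglongrightarrow> z + 0" by (intro tendsto_add xr)
      then show ?thesis by simp
    qed
    have yr: "(\<lambda>j. y (r j)) \<longlonglongrightarrow> z"
    proof -
      have "(\<lambda>j. norm (\<beta> (r j) *\<^sub>R (x (r j) - x (r j - 1)))) \<longlonglongrightarrow> 0"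
      proof (rule tendsto_sandwich[of "\<lambda>j. 0" _ sequentially "\<lambda>j. bb * d (r j)"])
        show "\<forall>\<^sub>F j in sequentially. 0 \<le> norm (\<beta> (r j) *\<^sub>R (x (r j) - x (r j - 1)))" by simp
        show "\<forall>\<^sub>F j in sequentially. norm (\<beta> (r j) *\<^sub>R (x (r j) - x (r j - 1))) \<le> bb * d (r j)"
          using bk b0 unfolding d_def by (intro always_eventually allI) (simp add: mult_right_mono)
        show "(\<lambda>j. 0) \<longlonglongrightarrow> (0::real)" by simp
        have "(\<lambda>j. bb * d (r j)) \<longlonglongrightarrow> bb * 0" by (intro tendsto_mult tendsto_const dr)
        then show "(\<lambda>j. bb * d (r j)) \<longlonglongrightarrow> 0" by simp
      qed
      then have "(\<lambda>j. \<beta> (r j) *\<^sub>R (x (r j) - x (r j - 1))) \<longlonglongrightarrow> 0" by (simp only: tendsto_norm_zero_iff)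
      then have "(\<lambda>j. x (r j) + \<beta> (r j) *\<^sub>R (x (r j) - x (r j - 1))) \<longlonglongrightarrow> z + 0" by (intro tendsto_add xr)
      then show ?thesis by (simp add: y_def)
    qed
    have Frs: "(\<lambda>j. Fr (s j)) \<longlonglongrightarrow> \<zeta>" using LIMSEQ_subseq_LIMSEQ[OF Frlim s] by (simp add: comp_def)
    have cont1: "isCont f1 q" for q using f1_grad[of q] by (rule has_derivative_continuous)
    have cont2: "isCont f2 q" for q using f2_grad[of q] by (rule has_derivative_continuous)
    have f1s: "(\<lambda>j. f1 (x (s j))) \<longlonglongrightarrow> f1 z" by (rule isCont_tendsto_compose[OF cont1 xs])
    have f2s: "(\<lambda>j. f2 (x (s j))) \<longlonglongrightarrow> f2 z" by (rule isCont_tendsto_compose[OF cont2 xs])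
    define \<gamma> where "\<gamma> = \<zeta> - f1 z + f2 z"
    have Gs: "(\<lambda>j. G (s j)) \<longlonglongrightarrow> \<gamma>"
    proof -
      have "(\<lambda>j. Fr (s j) - f1 (x (s j)) + f2 (x (s j))) \<longlonglongrightarrow> \<zeta> - f1 z + f2 z"
        by (intro tendsto_intros Frs f1s f2s)
      then show ?thesis unfolding Fr_def \<gamma>_def by simp
    qed
    have "(z, \<gamma>) \<in> {(x, r::real). g x \<le> ereal r}"
    proof (rule closed_sequentially[OF g_closed[unfolded closed_fun_def]])
      show "(\<lambda>j. (x (s j), G (s j))) n \<in> {(x, r::real). g x \<le> ereal r}" for n using gx by simp
      show "(\<lambda>j. (x (s j), G (s j))) \<longlonglongrightarrow> (z, \<gamma>)" by (intro tendsto_Pair xs Gs)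
    qed
    then have gz_le: "g z \<le> ereal \<gamma>" by simp
    then obtain gz where gz: "g z = ereal gz" using ninf[of z] by (cases "g z") auto
    have gzle: "gz \<le> \<gamma>" using gz_le gz by simp
    have ineq: "G (s j) + D (r j) \<bullet> (x (s j) - y (r j)) + L / 2 * (norm (x (s j) - y (r j)))\<^sup>2
        \<le> gz + D (r j) \<bullet> (z - y (r j)) + L / 2 * (norm (z - y (r j)))\<^sup>2" for j
    proof -
      have "g z \<noteq> \<infinity>" using gz by simp
      from PG[OF this, of "r j"]
      have "G (s j) + D (r j) \<bullet> (x (s j) - y (r j)) + L / 2 * (norm (x (s j) - y (r j)))\<^sup>2 + L / 2 * (norm (z - x (s j)))\<^sup>2
        \<le> gz + D (r j) \<bullet> (z - y (r j)) + L / 2 * (norm (z - y (r j)))\<^sup>2"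
        unfolding G_def s_def gz by simp
      moreover have "0 \<le> L / 2 * (norm (z - x (s j)))\<^sup>2" using L_pos by simp
      ultimately show ?thesis by linarith
    qed
    have gc1: "isCont grad1 q" for q
      using lipschitz_on_continuous_on[OF grad1_lip] by (simp add: continuous_on_eq_continuous_at)
    have gc2: "isCont grad2 q" for q
      using lipschitz_on_continuous_on[OF grad2_lip] by (simp add: continuous_on_eq_continuous_at)
    have Dr: "(\<lambda>j. D (r j)) \<longlonglongrightarrow> grad1 z - grad2 z" unfolding D_def
      by (intro tendsto_diff isCont_tendsto_compose[OF gc1 yr] isCont_tendsto_compose[OF gc2 yr])
    have lhs: "(\<lambda>j. G (s j) + D (r j) \<bullet> (x (s j) - y (r j)) + L / 2 * (norm (x (s j) - y (r j)))\<^sup>2)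
        \<longlonglongrightarrow> \<gamma> + (grad1 z - grad2 z) \<bullet> (z - z) + L / 2 * (norm (z - z))\<^sup>2"
      by (intro tendsto_intros Gs Dr xs yr)
    have rhs: "(\<lambda>j. gz + D (r j) \<bullet> (z - y (r j)) + L / 2 * (norm (z - y (r j)))\<^sup>2)
        \<longlonglongrightarrow> gz + (grad1 z - grad2 z) \<bullet> (z - z) + L / 2 * (norm (z - z))\<^sup>2"
      by (intro tendsto_intros Dr yr)
    have "\<gamma> + (grad1 z - grad2 z) \<bullet> (z - z) + L / 2 * (norm (z - z))\<^sup>2
        \<le> gz + (grad1 z - grad2 z) \<bullet> (z - z) + L / 2 * (norm (z - z))\<^sup>2"
      by (rule tendsto_le[OF trivial_limit_sequentially rhs lhs]) (use ineq in simp)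
    then have "\<gamma> \<le> gz" by simp
    then have "gz = \<gamma>" using gzle by simp
    then show "F z = ereal \<zeta>" using F_def[of z] gz unfolding \<gamma>_def by simp
  qed
qed

end
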